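(* Let $m=p_1^{m_1}\cdots p_k^{m_k}$ and let $(K_n,\alpha)$ be an edge-labeled complete graph over $\mathbb{Z}/m\mathbb{Z}$ with ordered edge labels $a_1,\dots,a_{r_n}$, where each $a_s=p_1^{n_{s1}}\cdots p_k^{n_{sk}}$ with $0\le n_{sj}\le m_j$ is a positive divisor of $m$ representing a zero divisor of $\mathbb{Z}/m\mathbb{Z}$. (1) If $a_{r_n}\mid a_{r_n-1}\mid\cdots\mid a_2\mid a_1\mid m$ and $m\neq a_1$, then the set $B_m$ consisting of $(1,1,\dots,1)$ together with, for each $k=2,\dots,n$, the vector whose $v_k$-entry is $a_{r_{k-1}+1}$ and all other entries are $0$ (i.e. $(0,a_1,0,\dots,0)$, $(0,0,a_2,0,\dots,0)$, $(0,0,0,a_4,0,\dots,0)$, $\dots$, $(0,\dots,0,a_{r_{n-1}+1})$), is a minimum flow-up generating set of $[\mathbb{Z}/m\mathbb{Z}]_{(K_n,\alpha)}$; thus its rank is $n$. (2) If $a_1\mid a_2\mid\cdots\mid a_{r_n}\mid m$ and $m\ne a_{r_n}$, then the set $B_m$ consisting of $(1,1,\dots,1)$ together with, for each $k=2,\dots,n$, the vector whose entries at $v_k,v_{k+1},\dots,v_n$ equal $a_{r_n-(n-k)}$ and whose entries at $v_1,\dots,v_{k-1}$ are $0$, is a minimum flow-up generating set of $[\mathbb{Z}/m\mathbb{Z}]_{(K_n,\alpha)}$; thus its rank is $n$.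
   Context: A spline on an edge-labeled graph $(G,\alpha)$ over $\mathbb{Z}/m\mathbb{Z}$ (edges labeled by nonzero ideals) is a vector $(f_{v_1},\dots,f_{v_n})\in(\mathbb{Z}/m\mathbb{Z})^n$ with $f_{v_i}-f_{v_j}\in\alpha(v_iv_j)$ for every edge; the splines form a $\mathbb{Z}$-module $[\mathbb{Z}/m\mathbb{Z}]_{(G,\alpha)}$. An $i$-th flow-up class is a spline with $f_{v_i}\ne0$ and $f_{v_t}=0$ for $t<i$. A minimum generating set is a generating set of the $\mathbb{Z}$-module of smallest possible size, this size being the rank; a minimum flow-up generating set is a minimum generating set consisting of flow-up classes. $K_n$ is the complete graph on $v_1,\dots,v_n$; $r_k=k(k-1)/2$. The edges are enumerated so that for $1\le j<k\le n$ the edge $v_jv_k$ is $e_{r_{k-1}+j}$ (so $e_1=v_1v_2$, $e_2=v_1v_3$, $e_3=v_2v_3$, $e_4=v_1v_4,\dots$). "Ordered edge labels $a_1,\dots,a_{r_n}$" means $\alpha(e_s)$ is the ideal generated by $a_s+m\mathbb{Z}$. Vectors are written $(f_{v_1},\dots,f_{v_n})$. *)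

theory Defs
  imports Main "HOL-Number_Theory.Cong"
begin

text \<open>Elements of (Z/mZ)^n are represented by functions nat => int that are supported
  on the vertex indices {1..n} and take canonical representatives in {0..<m}.
  Vertex v_i corresponds to index i.\<close>

definition r :: "nat \<Rightarrow> nat" where
  "r k = k * (k - 1) div 2"

definition is_vec :: "nat \<Rightarrow> int \<Rightarrow> (nat \<Rightarrow> int) \<Rightarrow> bool" where
  "is_vec n m f \<longleftrightarrow> (\<forall>i\<in>{1..n}. 0 \<le> f i \<and> f i < m) \<and> (\<forall>i. i \<notin> {1..n} \<longrightarrow> f i = 0)"

definition vec_of :: "nat \<Rightarrow> int \<Rightarrow> (nat \<Rightarrow> int) \<Rightarrow> (nat \<Rightarrow> int)" where
  "vec_of n m h = (\<lambda>i. if i \<in> {1..n} then h i mod m else 0)"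

definition in_ideal :: "int \<Rightarrow> int \<Rightarrow> int \<Rightarrow> bool" where
  "in_ideal m a x \<longleftrightarrow> (\<exists>c. [x = c * a] (mod m))"

text \<open>Splines on (K_n, alpha) with ordered edge labels a_1,...,a_{r_n}:
  the edge v_j v_k (j < k) is e_{r(k-1)+j}, labelled by the ideal generated by a (r(k-1)+j).\<close>
definition is_spline :: "nat \<Rightarrow> int \<Rightarrow> (nat \<Rightarrow> int) \<Rightarrow> (nat \<Rightarrow> int) \<Rightarrow> bool" where
  "is_spline n m a f \<longleftrightarrow> is_vec n m f \<and>
     (\<forall>j k. 1 \<le> j \<and> j < k \<and> k \<le> n \<longrightarrow> in_ideal m (a (r (k - 1) + j)) (f j - f k))"

definition splines :: "nat \<Rightarrow> int \<Rightarrow> (nat \<Rightarrow> int) \<Rightarrow> (nat \<Rightarrow> int) set" where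
  "splines n m a = {f. is_spline n m a f}"

definition gen_set :: "nat \<Rightarrow> int \<Rightarrow> (nat \<Rightarrow> int) \<Rightarrow> (nat \<Rightarrow> int) set \<Rightarrow> bool" where
  "gen_set n m a S \<longleftrightarrow> finite S \<and> S \<subseteq> splines n m a \<and>
     (\<forall>f\<in>splines n m a. \<exists>c :: (nat \<Rightarrow> int) \<Rightarrow> int.
        f = vec_of n m (\<lambda>i. \<Sum>g\<in>S. c g * g i))"

definition min_gen_set :: "nat \<Rightarrow> int \<Rightarrow> (nat \<Rightarrow> int) \<Rightarrow> (nat \<Rightarrow> int) set \<Rightarrow> bool" where
  "min_gen_set n m a S \<longleftrightarrow> gen_set n m a S \<and> (\<forall>T. gen_set n m a T \<longrightarrow> card S \<le> card T)"

definition spline_rank :: "nat \<Rightarrow> int \<Rightarrow> (nat \<Rightarrow> int) \<Rightarrow> nat" where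
  "spline_rank n m a = (LEAST k. \<exists>S. gen_set n m a S \<and> card S = k)"

definition flow_up :: "nat \<Rightarrow> (nat \<Rightarrow> int) \<Rightarrow> bool" where
  "flow_up i f \<longleftrightarrow> f i \<noteq> 0 \<and> (\<forall>t. 1 \<le> t \<and> t < i \<longrightarrow> f t = 0)"

definition min_flow_up_gen_set :: "nat \<Rightarrow> int \<Rightarrow> (nat \<Rightarrow> int) \<Rightarrow> (nat \<Rightarrow> int) set \<Rightarrow> bool" where
  "min_flow_up_gen_set n m a S \<longleftrightarrow> min_gen_set n m a S \<and>
     (\<forall>f\<in>S. \<exists>i\<in>{1..n}. flow_up i f)"

definition zero_divisor_mod :: "int \<Rightarrow> int \<Rightarrow> bool" where
  "zero_divisor_mod m a \<longleftrightarrow> (\<exists>y. \<not> m dvd y \<and> m dvd (a * y))"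

end

theory Submission
  imports Defs "HOL-Library.FuncSet"
begin


lemma r_Suc: "r (Suc k) = r k + k"
proof (cases k)
  case 0 then show ?thesis by (simp add: r_def)
next
  case (Suc j)
  have "Suc (Suc j) * Suc j = Suc j * j + 2 * Suc j" by simp
  then show ?thesis unfolding r_def using Suc by simp
qed

lemma r_mono: "k \<le> l \<Longrightarrow> r k \<le> r l"
  unfolding r_def by (intro div_le_mono mult_le_mono) auto

lemma r_pred: "1 \<le> k \<Longrightarrow> r k = r (k - 1) + (k - 1)"
  using r_Suc[of "k - 1"] by simp

lemma idx_range: "1 \<le> j \<Longrightarrow> j < k \<Longrightarrow> k \<le> n \<Longrightarrow> r (k - 1) + j \<in> {1..r n}"
  using r_pred[of k] r_mono[of k n] by auto

lemma in_ideal_dvd: "a dvd m \<Longrightarrow> in_ideal m a x \<longleftrightarrow> a dvd x"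
  unfolding in_ideal_def
proof
  assume "a dvd m" "\<exists>c. [x = c * a] (mod m)"
  then obtain c where "[x = c * a] (mod m)" by blast
  then have "a dvd x - c * a" using \<open>a dvd m\<close> cong_iff_dvd_diff dvd_trans by blast
  then have "a dvd (x - c * a) + c * a" by (intro dvd_add) auto
  then show "a dvd x" by simp
next
  assume "a dvd x" then obtain c where "x = a * c" by blast
  then show "\<exists>c. [x = c * a] (mod m)" by (intro exI[of _ c]) (simp add: mult.commute)
qed

lemma spline_iff:
  assumes L: "\<forall>s\<in>{1..r n}. a s dvd m"
  shows "is_spline n m a f \<longleftrightarrow> is_vec n m f \<and>
     (\<forall>j k. 1 \<le> j \<and> j < k \<and> k \<le> n \<longrightarrow> a (r (k - 1) + j) dvd (f j - f k))"
proof -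
  have *: "in_ideal m (a (r (k - 1) + j)) x \<longleftrightarrow> a (r (k - 1) + j) dvd x" if "1 \<le> j \<and> j < k \<and> k \<le> n" for j k x
  proof -
    have "a (r (k - 1) + j) dvd m" using L idx_range[of j k n] that by blast
    then show ?thesis by (rule in_ideal_dvd)
  qed
  show ?thesis unfolding is_spline_def using * by blast
qed

lemma vec_of_is_vec: "0 < m \<Longrightarrow> is_vec n m (vec_of n m h)"
  unfolding is_vec_def vec_of_def by auto

lemma dvd_mod_diff: "(b::int) dvd m \<Longrightarrow> b dvd x - y \<Longrightarrow> b dvd (x mod m - y mod m)"
proof -
  assume "b dvd m" "b dvd x - y"
  have "x mod m - y mod m = (x - y) - m * (x div m - y div m)"
    by (simp add: algebra_simps minus_div_mult_eq_mod[symmetric])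
  then show ?thesis using \<open>b dvd m\<close> \<open>b dvd x - y\<close> by simp
qed

lemma closure:
  assumes L: "\<forall>s\<in>{1..r n}. a s dvd m" and m0: "0 < m"
    and F: "\<forall>x\<in>I. F x \<in> splines n m a"
  shows "vec_of n m (\<lambda>i. \<Sum>x\<in>I. c x * F x i) \<in> splines n m a"
  unfolding splines_def mem_Collect_eq spline_iff[OF L]
proof (intro conjI allI impI)
  show "is_vec n m (vec_of n m (\<lambda>i. \<Sum>x\<in>I. c x * F x i))" using m0 by (rule vec_of_is_vec)
  fix j k assume jk: "1 \<le> j \<and> j < k \<and> k \<le> n"
  have am: "a (r (k - 1) + j) dvd m" using L idx_range jk by auto
  have "a (r (k - 1) + j) dvd (\<Sum>x\<in>I. c x * F x j) - (\<Sum>x\<in>I. c x * F x k)"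
    unfolding sum_subtractf[symmetric] right_diff_distrib[symmetric]
  proof (rule dvd_sum)
    fix x assume "x \<in> I"
    then have "is_spline n m a (F x)" using F by (auto simp: splines_def)
    then have "a (r (k - 1) + j) dvd F x j - F x k" using spline_iff[OF L] jk by blast
    then show "a (r (k - 1) + j) dvd c x * (F x j - F x k)" by simp
  qed
  then show "a (r (k - 1) + j) dvd vec_of n m (\<lambda>i. \<Sum>x\<in>I. c x * F x i) j - vec_of n m (\<lambda>i. \<Sum>x\<in>I. c x * F x i) k"
    using jk am dvd_mod_diff by (simp add: vec_of_def)
qed

lemma key_num:
  fixes y Q b m p :: int
  assumes b0: "0 < b" and bp: "b * p dvd m" and c: "[y = b * Q] (mod m)"
  shows "[(y mod m) div b = Q] (mod p)"
proof -
  obtain e where e: "m = b * p * e" using bp by blast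
  have "y mod m = (b * Q) mod m" using c by (simp add: cong_def)
  also have "\<dots> = b * Q - m * (b * Q div m)" by (simp add: minus_div_mult_eq_mod[symmetric] algebra_simps)
  also have "\<dots> = b * (Q - p * (e * (b * Q div m)))" by (simp add: e algebra_simps)
  finally have "(y mod m) div b = Q - p * (e * (b * Q div m))" using b0 by simp
  then show ?thesis by (simp add: cong_iff_lin)
qed

lemma count_lemma:
  fixes p :: int and T :: "'a set" and \<psi> :: "'a \<Rightarrow> nat \<Rightarrow> int"
  assumes p2: "2 \<le> p" and fin: "finite T"
  and V: "\<forall>v\<in>PiE {1..n} (\<lambda>_. {0..<p}). \<exists>c. \<forall>i\<in>{1..n}. v i = (\<Sum>g\<in>T. c g * \<psi> g i) mod p"
  shows "n \<le> card T"
proof -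
  let ?W = "(\<lambda>c. restrict (\<lambda>i. (\<Sum>g\<in>T. c g * \<psi> g i) mod p) {1..n}) ` PiE T (\<lambda>_. {0..<p})"
  have sub: "PiE {1..n} (\<lambda>_. {0..<p}) \<subseteq> ?W"
  proof
    fix v assume v: "v \<in> PiE {1..n} (\<lambda>_. {0..<p})"
    then obtain c where c: "\<forall>i\<in>{1..n}. v i = (\<Sum>g\<in>T. c g * \<psi> g i) mod p" using V by blast
    define c' where "c' = restrict (\<lambda>g. c g mod p) T"
    have c'P: "c' \<in> PiE T (\<lambda>_. {0..<p})" using p2 unfolding c'_def by auto
    have eq: "(\<Sum>g\<in>T. c' g * \<psi> g i) mod p = (\<Sum>g\<in>T. c g * \<psi> g i) mod p" for i
    proof -
      have "(\<Sum>g\<in>T. c' g * \<psi> g i) = (\<Sum>g\<in>T. (c g mod p) * \<psi> g i)" unfolding c'_def by (rule sum.cong) auto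
      moreover have "[(\<Sum>g\<in>T. (c g mod p) * \<psi> g i) = (\<Sum>g\<in>T. c g * \<psi> g i)] (mod p)"
        by (rule cong_sum) (simp add: cong_scalar_right)
      ultimately show ?thesis by (simp add: cong_def)
    qed
    have "v = restrict (\<lambda>i. (\<Sum>g\<in>T. c' g * \<psi> g i) mod p) {1..n}"
    proof
      fix i show "v i = restrict (\<lambda>i. (\<Sum>g\<in>T. c' g * \<psi> g i) mod p) {1..n} i"
      proof (cases "i \<in> {1..n}")
        case True
        then show ?thesis using c eq[of i] by simp
      next
        case False
        show ?thesis unfolding restrict_def if_not_P[OF False] by (rule PiE_arb[OF v False])
      qed
    qed
    then show "v \<in> ?W" by (rule image_eqI[OF _ c'P])
  qed
  have finW: "finite ?W" using fin by (intro finite_imageI finite_PiE) auto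
  have "nat p ^ n = card (PiE {1..n} (\<lambda>_. {0..<p}))" by (simp add: card_PiE)
  also have "\<dots> \<le> card ?W" using sub finW by (rule card_mono[rotated])
  also have "\<dots> \<le> card (PiE T (\<lambda>_. {0..<p}))" by (rule card_image_le) (use fin in \<open>auto intro: finite_PiE\<close>)
  also have "\<dots> = nat p ^ card T" using fin by (simp add: card_PiE)
  finally have le: "nat p ^ n \<le> nat p ^ card T" .
  have "1 < nat p" using p2 by simp
  then show ?thesis using le by (rule power_le_imp_le_exp)
qed


lemma generic:
  fixes n :: nat and m p :: int and a :: "nat \<Rightarrow> int" and G :: "nat \<Rightarrow> nat \<Rightarrow> int"
    and \<beta> :: "nat \<Rightarrow> int" and prev :: "nat \<Rightarrow> nat"
  assumes n2: "2 \<le> n" and m1: "1 < m" and L: "\<forall>s\<in>{1..r n}. a s dvd m"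
  and p2: "2 \<le> p"
  and Gspl: "\<forall>k\<in>{2..n}. G k \<in> splines n m a"
  and Ginj: "inj_on G {2..n}"
  and Gval1: "\<forall>k\<in>{2..n}. G k 1 = 0"
  and Gflow: "\<forall>k\<in>{2..n}. G k k \<noteq> 0 \<and> (\<forall>t. 1 \<le> t \<and> t < k \<longrightarrow> G k t = 0)"
  and Ggen: "\<forall>f\<in>splines n m a. \<exists>c0 coef. \<forall>i\<in>{1..n}. f i = (c0 + (\<Sum>k\<in>{2..n}. coef k * G k i)) mod m"
  and beta: "\<forall>k\<in>{2..n}. 0 < \<beta> k \<and> \<beta> k * p dvd m \<and> prev k \<in> {1..n}"
  and betadvd: "\<forall>f\<in>splines n m a. \<forall>k\<in>{2..n}. \<beta> k dvd (f k - f (prev k))"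
  and Gdiff: "\<forall>j\<in>{2..n}. \<forall>k\<in>{2..n}. [G j k - G j (prev k) = (if j = k then \<beta> k else 0)] (mod m)"
  shows "min_flow_up_gen_set n m a ({vec_of n m (\<lambda>_. 1)} \<union> G ` {2..n}) \<and> spline_rank n m a = n"
proof -
  define one where "one = vec_of n m (\<lambda>_. 1)"
  define S where "S = {one} \<union> G ` {2..n}"
  have m0: "0 < m" using m1 by simp
  have one_i: "one i = 1" if "i \<in> {1..n}" for i using that m1 by (simp add: one_def vec_of_def)
  have one_vec: "is_vec n m one" unfolding one_def by (rule vec_of_is_vec[OF m0])
  have one_spl: "one \<in> splines n m a"
    unfolding splines_def mem_Collect_eq spline_iff[OF L]
    using one_vec one_i by auto
  have one_notin: "one \<notin> G ` {2..n}"
  proof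
    assume "one \<in> G ` {2..n}"
    then obtain k where "k \<in> {2..n}" "one = G k" by blast
    then show False using Gval1 one_i[of 1] n2 by auto
  qed
  have cardS: "card S = n"
    unfolding S_def using one_notin card_image[OF Ginj] n2 by simp
  have finS: "finite S" unfolding S_def by simp
  have sumS: "(\<Sum>g\<in>S. c g * g i) = c one * one i + (\<Sum>k\<in>{2..n}. c (G k) * G k i)" for c i
    unfolding S_def using one_notin by (simp add: sum.reindex[OF Ginj])
  have gen: "gen_set n m a S"
    unfolding gen_set_def
  proof (intro conjI ballI)
    show "finite S" by (rule finS)
    show "S \<subseteq> splines n m a" unfolding S_def using one_spl Gspl by auto
    fix f assume f: "f \<in> splines n m a"
    then obtain c0 coef where cc: "\<forall>i\<in>{1..n}. f i = (c0 + (\<Sum>k\<in>{2..n}. coef k * G k i)) mod m"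
      using Ggen by blast
    define c where "c g = (if g = one then c0 else coef (inv_into {2..n} G g))" for g
    have cG: "c (G k) = coef k" if "k \<in> {2..n}" for k
      using that one_notin Ginj by (auto simp: c_def inv_into_f_f)
    have fv: "is_vec n m f" using f by (simp add: splines_def is_spline_def)
    show "\<exists>c. f = vec_of n m (\<lambda>i. \<Sum>g\<in>S. c g * g i)"
    proof (intro exI[of _ c] ext)
      fix i show "f i = vec_of n m (\<lambda>i. \<Sum>g\<in>S. c g * g i) i"
      proof (cases "i \<in> {1..n}")
        case True
        have "(\<Sum>g\<in>S. c g * g i) = c0 + (\<Sum>k\<in>{2..n}. coef k * G k i)"
          unfolding sumS using True one_i cG by (simp add: c_def)
        then show ?thesis using True cc by (simp add: vec_of_def)
      next
        case False
        have "f i = 0" using fv False unfolding is_vec_def by blast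
        then show ?thesis unfolding vec_of_def if_not_P[OF False] .
      qed
    qed
  qed
  define \<psi> where "\<psi> f i = (if i = 1 then f 1 else ((f i - f (prev i)) mod m) div \<beta> i)" for f :: "nat \<Rightarrow> int" and i
  have pm: "p dvd m"
  proof -
    have "\<beta> 2 * p dvd m" using beta n2 by auto
    then show ?thesis using dvd_mult_right by blast
  qed
  have lin: "[\<psi> (vec_of n m (\<lambda>i. \<Sum>x\<in>I. c x * F x i)) i = (\<Sum>x\<in>I. c x * \<psi> (F x) i)] (mod p)"
    if F: "\<forall>x\<in>I. F x \<in> splines n m a" and i: "i \<in> {1..n}" for I :: "'b set" and F c i
  proof (cases "i = 1")
    case True
    have "[(\<Sum>x\<in>I. c x * F x 1) mod m = (\<Sum>x\<in>I. c x * F x 1)] (mod p)"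
      using pm by (metis cong_def mod_mod_cancel)
    then show ?thesis using True n2 by (simp add: \<psi>_def vec_of_def)
  next
    case False
    then have k: "i \<in> {2..n}" using i by auto
    have b: "0 < \<beta> i" "\<beta> i * p dvd m" "prev i \<in> {1..n}" using beta k by auto
    have bm: "\<beta> i dvd m" using b(2) dvd_mult_left by blast
    have each: "[F x i - F x (prev i) = \<beta> i * \<psi> (F x) i] (mod m)" if "x \<in> I" for x
    proof -
      have "\<beta> i dvd F x i - F x (prev i)" using betadvd F that k by blast
      then have "\<beta> i dvd (F x i - F x (prev i)) mod m" using bm by (simp add: dvd_mod_iff)
      then have "(F x i - F x (prev i)) mod m = \<beta> i * \<psi> (F x) i" using False by (simp add: \<psi>_def)
      moreover have "[F x i - F x (prev i) = (F x i - F x (prev i)) mod m] (mod m)"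
        by (rule cong_mod_rightI) (rule cong_refl)
      ultimately show ?thesis by simp
    qed
    let ?f = "vec_of n m (\<lambda>i. \<Sum>x\<in>I. c x * F x i)"
    have "[?f i - ?f (prev i) = (\<Sum>x\<in>I. c x * F x i) - (\<Sum>x\<in>I. c x * F x (prev i))] (mod m)"
      using i b(3) by (simp add: vec_of_def cong_def mod_diff_eq)
    also have "(\<Sum>x\<in>I. c x * F x i) - (\<Sum>x\<in>I. c x * F x (prev i)) = (\<Sum>x\<in>I. c x * (F x i - F x (prev i)))"
      by (simp add: sum_subtractf[symmetric] right_diff_distrib)
    also have "[\<dots> = (\<Sum>x\<in>I. c x * (\<beta> i * \<psi> (F x) i))] (mod m)"
      by (rule cong_sum) (simp add: each cong_scalar_left)
    also have "(\<Sum>x\<in>I. c x * (\<beta> i * \<psi> (F x) i)) = \<beta> i * (\<Sum>x\<in>I. c x * \<psi> (F x) i)"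
      by (simp add: sum_distrib_left algebra_simps)
    finally have "[((?f i - ?f (prev i)) mod m) div \<beta> i = (\<Sum>x\<in>I. c x * \<psi> (F x) i)] (mod p)"
      using key_num b by blast
    then show ?thesis using False by (simp add: \<psi>_def)
  qed
  have lower: "n \<le> card T" if T: "gen_set n m a T" for T
  proof (rule count_lemma[where p=p and T=T and \<psi>=\<psi>, OF p2])
    show "finite T" using T by (simp add: gen_set_def)
    show "\<forall>v\<in>PiE {1..n} (\<lambda>_. {0..<p}). \<exists>c. \<forall>i\<in>{1..n}. v i = (\<Sum>g\<in>T. c g * \<psi> g i) mod p"
    proof
      fix v assume v: "v \<in> PiE {1..n} (\<lambda>_. {0..<p})"
      define F where "F x = (if x = 1 then one else G x)" for x
      have Fs: "\<forall>x\<in>{1..n}. F x \<in> splines n m a" using one_spl Gspl by (auto simp: F_def)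
      define f where "f = vec_of n m (\<lambda>i. \<Sum>x\<in>{1..n}. v x * F x i)"
      have fs: "f \<in> splines n m a" unfolding f_def by (rule closure[OF L m0 Fs])
      have psiF: "[\<psi> f i = v i] (mod p)" if i: "i \<in> {1..n}" for i
      proof -
        have "[\<psi> f i = (\<Sum>x\<in>{1..n}. v x * \<psi> (F x) i)] (mod p)"
          unfolding f_def by (rule lin[OF Fs i])
        also have "[(\<Sum>x\<in>{1..n}. v x * \<psi> (F x) i) = (\<Sum>x\<in>{1..n}. v x * (if x = i then 1 else 0))] (mod p)"
        proof (rule cong_sum)
          fix x assume x: "x \<in> {1..n}"
          show "[v x * \<psi> (F x) i = v x * (if x = i then 1 else 0)] (mod p)"
          proof (rule cong_scalar_left)
            show "[\<psi> (F x) i = (if x = i then 1 else 0)] (mod p)"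
            proof (cases "i = 1")
              case True
              then show ?thesis using x Gval1 one_i[of 1] n2 by (auto simp: \<psi>_def F_def)
            next
              case False
              then have k: "i \<in> {2..n}" using i by auto
              have b: "0 < \<beta> i" "\<beta> i * p dvd m" "prev i \<in> {1..n}" using beta k by auto
              have "[F x i - F x (prev i) = \<beta> i * (if x = i then 1 else 0)] (mod m)"
              proof (cases "x = 1")
                case True
                then show ?thesis using False one_i i b(3) by (simp add: F_def)
              next
                case False
                then have x2: "x \<in> {2..n}" using x by auto
                have gd: "[G x i - G x (prev i) = (if x = i then \<beta> i else 0)] (mod m)" using Gdiff x2 k by blast
                have Fx: "F x = G x" using False by (simp add: F_def)
                show ?thesis
                proof (cases "x = i")
                  case True then show ?thesis using gd Fx by simp
                next
                  case False then show ?thesis using gd Fx by simp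
                qed
              qed
              then have "[((F x i - F x (prev i)) mod m) div \<beta> i = (if x = i then 1 else 0)] (mod p)"
                using key_num b by blast
              then show ?thesis using False by (simp add: \<psi>_def)
            qed
          qed
        qed
        also have "(\<Sum>x\<in>{1..n}. v x * (if x = i then 1 else 0)) = (\<Sum>x\<in>{1..n}. if x = i then v x else 0)"
          by (rule sum.cong) auto
        also have "\<dots> = v i" unfolding sum.delta[OF finite_atLeastAtMost] using i by (simp only: if_True)
        finally show ?thesis .
      qed
      obtain c where c: "f = vec_of n m (\<lambda>i. \<Sum>g\<in>T. c g * g i)" using T fs by (auto simp: gen_set_def)
      have Ts: "\<forall>g\<in>T. id g \<in> splines n m a" using T by (auto simp: gen_set_def)
      show "\<exists>c. \<forall>i\<in>{1..n}. v i = (\<Sum>g\<in>T. c g * \<psi> g i) mod p"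
      proof (intro exI[of _ c] ballI)
        fix i assume i: "i \<in> {1..n}"
        have "[\<psi> f i = (\<Sum>g\<in>T. c g * \<psi> (id g) i)] (mod p)"
          unfolding c using lin[OF Ts i, of c] by simp
        then have "[\<psi> f i = (\<Sum>g\<in>T. c g * \<psi> g i)] (mod p)" by simp
        then have "[v i = (\<Sum>g\<in>T. c g * \<psi> g i)] (mod p)"
          using psiF[OF i] cong_sym cong_trans by blast
        moreover have "v i \<in> {0..<p}" using v i by auto
        ultimately show "v i = (\<Sum>g\<in>T. c g * \<psi> g i) mod p" by (simp add: cong_def)
      qed
    qed
  qed
  have flow: "\<forall>f\<in>S. \<exists>i\<in>{1..n}. flow_up i f"
  proof
    fix f assume "f \<in> S"
    then consider "f = one" | k where "k \<in> {2..n}" "f = G k" unfolding S_def by blast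
    then show "\<exists>i\<in>{1..n}. flow_up i f"
    proof cases
      case 1
      have "flow_up 1 f" using 1 one_i[of 1] n2 by (simp add: flow_up_def)
      then show ?thesis using n2 by (intro bexI[of _ 1]) auto
    next
      case 2
      have "flow_up k f" using 2 Gflow by (simp add: flow_up_def)
      then show ?thesis using 2 by (intro bexI[of _ k]) auto
    qed
  qed
  have mg: "min_gen_set n m a S" using gen lower cardS by (simp add: min_gen_set_def)
  have rank: "spline_rank n m a = n"
    unfolding spline_rank_def
  proof (rule Least_equality)
    show "\<exists>S. gen_set n m a S \<and> card S = n" using gen cardS by blast
    show "\<And>y. \<exists>S. gen_set n m a S \<and> card S = y \<Longrightarrow> n \<le> y" using lower by blast
  qed
  show ?thesis using mg flow rank by (simp add: min_flow_up_gen_set_def S_def one_def)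
qed




lemma chain_dec:
  assumes ch: "\<forall>s\<in>{1..<N}. (a::nat\<Rightarrow>int) (s + 1) dvd a s"
  shows "1 \<le> s \<Longrightarrow> s \<le> t \<Longrightarrow> t \<le> N \<Longrightarrow> a t dvd a s"
proof (induction t)
  case 0 then show ?case by simp
next
  case (Suc t)
  show ?case
  proof (cases "s = Suc t")
    case True then show ?thesis by simp
  next
    case False
    then have "a t dvd a s" using Suc by simp
    moreover have "a (t + 1) dvd a t" using ch Suc False by auto
    ultimately show ?thesis by (metis Suc_eq_plus1 dvd_trans)
  qed
qed

lemma chain_inc:
  assumes ch: "\<forall>s\<in>{1..<N}. (a::nat\<Rightarrow>int) s dvd a (s + 1)"
  shows "1 \<le> s \<Longrightarrow> s \<le> t \<Longrightarrow> t \<le> N \<Longrightarrow> a s dvd a t"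
proof (induction t)
  case 0 then show ?case by simp
next
  case (Suc t)
  show ?case
  proof (cases "s = Suc t")
    case True then show ?thesis by simp
  next
    case False
    then have "a s dvd a t" using Suc by simp
    moreover have "a t dvd a (t + 1)" using ch Suc False by auto
    ultimately show ?thesis by (metis Suc_eq_plus1 dvd_trans)
  qed
qed

lemma tele: "1 \<le> i \<Longrightarrow> (\<Sum>k\<in>{2..i}. (f::nat\<Rightarrow>int) k - f (k - 1)) = f i - f 1"
proof (induction i)
  case 0 then show ?case by simp
next
  case (Suc i)
  show ?case
  proof (cases "i = 0")
    case True then show ?thesis by simp
  next
    case False
    then have "(\<Sum>k\<in>{2..Suc i}. f k - f (k - 1)) = (\<Sum>k\<in>{2..i}. f k - f (k - 1)) + (f (Suc i) - f i)"
      by simp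
    then show ?thesis using Suc False by simp
  qed
qed

lemma p_ge2:
  fixes m B :: int
  assumes "0 < B" "B dvd m" "B \<noteq> m" "1 < m"
  shows "2 \<le> m div B" "B * (m div B) = m"
proof -
  show "B * (m div B) = m" using assms by simp
  then have "m div B \<noteq> 1" using assms by auto
  moreover have "0 < m div B" using assms by (simp add: pos_imp_zdiv_pos_iff zdvd_imp_le)
  ultimately show "2 \<le> m div B" by simp
qed


lemma spl_vec: "f \<in> splines n m a \<Longrightarrow> i \<in> {1..n} \<Longrightarrow> f i mod m = f i"
  unfolding splines_def is_spline_def is_vec_def by auto

lemma case1:
  fixes n :: nat and m :: int and a :: "nat \<Rightarrow> int"
  assumes n2: "2 \<le> n" and m1: "1 < m"
    and lab: "\<forall>s\<in>{1..r n}. 0 < a s \<and> a s dvd m"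
    and ch: "\<forall>s\<in>{1..<r n}. a (s + 1) dvd a s" and a1m: "a 1 dvd m" and ne: "m \<noteq> a 1"
  shows "min_flow_up_gen_set n m a
          ({vec_of n m (\<lambda>_. 1)} \<union>
           (\<lambda>k. vec_of n m (\<lambda>i. if i = k then a (r (k - 1) + 1) else 0)) ` {2..n})
        \<and> spline_rank n m a = n"
proof -
  define b where "b k = a (r (k - 1) + 1)" for k
  define G where "G k = vec_of n m (\<lambda>i. if i = k then a (r (k - 1) + 1) else 0)" for k
  have L: "\<forall>s\<in>{1..r n}. a s dvd m" using lab by blast
  have idx: "r (k - 1) + 1 \<in> {1..r n}" if "k \<in> {2..n}" for k using idx_range[of 1 k n] that by auto
  have rn: "1 \<in> {1..r n}" using idx[of 2] n2 by auto
  have a1pos: "0 < a 1" using lab rn by blast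
  have a1lt: "a 1 < m" using a1m ne m1 zdvd_imp_le[of "a 1" m] by linarith
  have bdvd: "b k dvd a 1" if "k \<in> {2..n}" for k
    unfolding b_def using chain_dec[OF ch, of 1 "r (k - 1) + 1"] idx[OF that] by auto
  have bpos: "0 < b k" if "k \<in> {2..n}" for k unfolding b_def using lab idx[OF that] by blast
  have blt: "b k < m" if "k \<in> {2..n}" for k
    using zdvd_imp_le[OF bdvd[OF that] a1pos] a1lt by linarith
  have Geq: "G k = (\<lambda>i. if i = k then b k else 0)" if k: "k \<in> {2..n}" for k
  proof
    fix i show "G k i = (if i = k then b k else 0)"
      using bpos[OF k] blt[OF k] k unfolding G_def vec_of_def b_def[symmetric] by auto
  qed
  define p where "p = m div a 1"
  have p2: "2 \<le> p" and a1p: "a 1 * p = m" unfolding p_def using p_ge2[OF a1pos a1m ne[symmetric] m1] by auto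
  have res: "min_flow_up_gen_set n m a ({vec_of n m (\<lambda>_. 1)} \<union> G ` {2..n}) \<and> spline_rank n m a = n"
  proof (rule generic[where p = p and \<beta> = b and prev = "\<lambda>_. 1", OF n2 m1 L p2])
    show "\<forall>k\<in>{2..n}. G k \<in> splines n m a"
    proof
      fix k assume k: "k \<in> {2..n}"
      have iv: "is_vec n m (G k)" unfolding G_def using m1 by (intro vec_of_is_vec) simp
      have "a (r (l - 1) + j) dvd G k j - G k l" if jl: "1 \<le> j \<and> j < l \<and> l \<le> n" for j l
      proof -
        have t: "r (l - 1) + j \<in> {1..r n}" using idx_range[of j l n] jl by auto
        consider "j = k" | "l = k" | "j \<noteq> k" "l \<noteq> k" by blast
        then show ?thesis
        proof cases
          case 1
          have "r (k - 1) \<le> r (l - 1)" using jl 1 by (intro r_mono) auto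
          then have "a (r (l - 1) + j) dvd b k" unfolding b_def using chain_dec[OF ch, of "r (k - 1) + 1" "r (l - 1) + j"] t 1 jl
            by auto
          then show ?thesis using Geq[OF k] 1 jl by simp
        next
          case 2
          have "a (r (l - 1) + j) dvd b k" unfolding b_def using chain_dec[OF ch, of "r (k - 1) + 1" "r (l - 1) + j"] t 2 jl
            by auto
          then show ?thesis using Geq[OF k] 2 jl by simp
        next
          case 3 then show ?thesis using Geq[OF k] by simp
        qed
      qed
      then show "G k \<in> splines n m a" unfolding splines_def mem_Collect_eq spline_iff[OF L] using iv by blast
    qed
    show "inj_on G {2..n}"
    proof (rule inj_onI)
      fix x y assume x: "x \<in> {2..n}" and y: "y \<in> {2..n}" and e: "G x = G y"
      have "G x x = b x" using Geq[OF x] by simp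
      moreover have "G y x = (if x = y then b y else 0)" using Geq[OF y] by simp
      ultimately show "x = y" using e bpos[OF x] by (metis less_irrefl)
    qed
    show "\<forall>k\<in>{2..n}. G k 1 = 0" using Geq by auto
    show "\<forall>k\<in>{2..n}. G k k \<noteq> 0 \<and> (\<forall>t. 1 \<le> t \<and> t < k \<longrightarrow> G k t = 0)"
      using Geq bpos by (metis less_irrefl order_less_irrefl)
    show "\<forall>f\<in>splines n m a. \<exists>c0 coef. \<forall>i\<in>{1..n}. f i = (c0 + (\<Sum>k\<in>{2..n}. coef k * G k i)) mod m"
    proof
      fix f assume f: "f \<in> splines n m a"
      have fd: "b k dvd f k - f 1" if "k \<in> {2..n}" for k
      proof -
        have sp: "\<forall>j k. 1 \<le> j \<and> j < k \<and> k \<le> n \<longrightarrow> a (r (k - 1) + j) dvd f j - f k"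
          using f unfolding splines_def mem_Collect_eq spline_iff[OF L] by blast
        have "a (r (k - 1) + 1) dvd f 1 - f k" using sp[rule_format, of 1 k] that by auto
        then show ?thesis unfolding b_def by (simp add: dvd_diff_commute)
      qed
      define coef where "coef k = (f k - f 1) div b k" for k
      show "\<exists>c0 coef. \<forall>i\<in>{1..n}. f i = (c0 + (\<Sum>k\<in>{2..n}. coef k * G k i)) mod m"
      proof (intro exI[of _ "f 1"] exI[of _ coef] ballI)
        fix i assume i: "i \<in> {1..n}"
        have "(\<Sum>k\<in>{2..n}. coef k * G k i) = (\<Sum>k\<in>{2..n}. if k = i then coef k * b k else 0)"
          by (rule sum.cong) (auto simp: Geq)
        also have "\<dots> = (if i \<in> {2..n} then coef i * b i else 0)"
          by (rule sum.delta[OF finite_atLeastAtMost])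
        also have "\<dots> = f i - f 1"
        proof (cases "i \<in> {2..n}")
          case True
          then show ?thesis using fd[OF True] unfolding coef_def by simp
        next
          case False then have "i = 1" using i by auto
          then show ?thesis using False by simp
        qed
        finally show "f i = (f 1 + (\<Sum>k\<in>{2..n}. coef k * G k i)) mod m" using spl_vec[OF f i] by simp
      qed
    qed
    show "\<forall>k\<in>{2..n}. 0 < b k \<and> b k * p dvd m \<and> 1 \<in> {1..n}"
    proof
      fix k assume k: "k \<in> {2..n}"
      have "b k * p dvd a 1 * p" using bdvd[OF k] by (rule mult_dvd_mono) simp
      then show "0 < b k \<and> b k * p dvd m \<and> 1 \<in> {1..n}" using bpos[OF k] a1p k by auto
    qed
    show "\<forall>f\<in>splines n m a. \<forall>k\<in>{2..n}. b k dvd f k - f 1"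
    proof (intro ballI)
      fix f k assume f: "f \<in> splines n m a" and k: "k \<in> {2..n}"
      have sp: "\<forall>j k. 1 \<le> j \<and> j < k \<and> k \<le> n \<longrightarrow> a (r (k - 1) + j) dvd f j - f k"
        using f unfolding splines_def mem_Collect_eq spline_iff[OF L] by blast
      have "a (r (k - 1) + 1) dvd f 1 - f k" using sp[rule_format, of 1 k] k by auto
      then show "b k dvd f k - f 1" unfolding b_def by (simp add: dvd_diff_commute)
    qed
    show "\<forall>j\<in>{2..n}. \<forall>k\<in>{2..n}. [G j k - G j 1 = (if j = k then b k else 0)] (mod m)"
      using Geq by auto
  qed
  then show ?thesis unfolding G_def .
qed


lemma eqidx: "1 \<le> k \<Longrightarrow> k \<le> n \<Longrightarrow> r n - (n - k) = r (n - 1) + (k - 1)"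
  using r_pred[of n] by auto

lemma case2:
  fixes n :: nat and m :: int and a :: "nat \<Rightarrow> int"
  assumes n2: "2 \<le> n" and m1: "1 < m"
    and lab: "\<forall>s\<in>{1..r n}. 0 < a s \<and> a s dvd m"
    and ch: "\<forall>s\<in>{1..<r n}. a s dvd a (s + 1)" and arn: "a (r n) dvd m" and ne: "m \<noteq> a (r n)"
  shows "min_flow_up_gen_set n m a
          ({vec_of n m (\<lambda>_. 1)} \<union>
           (\<lambda>k. vec_of n m (\<lambda>i. if k \<le> i then a (r n - (n - k)) else 0)) ` {2..n})
        \<and> spline_rank n m a = n"
proof -
  define d where "d k = a (r n - (n - k))" for k
  define G where "G k = vec_of n m (\<lambda>i. if k \<le> i then a (r n - (n - k)) else 0)" for k
  have L: "\<forall>s\<in>{1..r n}. a s dvd m" using lab by blast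
  have dI: "d k = a (r (n - 1) + (k - 1))" if "k \<in> {2..n}" for k
    unfolding d_def using eqidx[of k n] that by auto
  have rnpred: "r n = r (n - 1) + (n - 1)" using r_pred[of n] n2 by simp
  have idx: "r (n - 1) + (k - 1) \<in> {1..r n}" if "k \<in> {2..n}" for k using that rnpred by auto
  have rn: "r n \<in> {1..r n}" using idx[of 2] n2 by auto
  have apos: "0 < a (r n)" using lab rn by blast
  have alt: "a (r n) < m" using arn ne m1 zdvd_imp_le[of "a (r n)" m] by linarith
  have ddvd: "d k dvd a (r n)" if "k \<in> {2..n}" for k
    unfolding dI[OF that] using chain_inc[OF ch, of "r (n - 1) + (k - 1)" "r n"] idx[OF that] by auto
  have dpos: "0 < d k" if "k \<in> {2..n}" for k unfolding dI[OF that] using lab idx[OF that] by blast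
  have dlt: "d k < m" if "k \<in> {2..n}" for k
    using zdvd_imp_le[OF ddvd[OF that] apos] alt by linarith
  have Geq: "G k = (\<lambda>i. if k \<le> i \<and> i \<le> n then d k else 0)" if k: "k \<in> {2..n}" for k
  proof
    fix i show "G k i = (if k \<le> i \<and> i \<le> n then d k else 0)"
      using dpos[OF k] dlt[OF k] k unfolding G_def vec_of_def d_def[symmetric] by auto
  qed
  have spl: "\<forall>j l. 1 \<le> j \<and> j < l \<and> l \<le> n \<longrightarrow> a (r (l - 1) + j) dvd f j - f l"
    if f: "f \<in> splines n m a" for f
    using f unfolding splines_def mem_Collect_eq spline_iff[OF L] by blast
  define p where "p = m div a (r n)"
  have p2: "2 \<le> p" and ap: "a (r n) * p = m" unfolding p_def using p_ge2[OF apos arn ne[symmetric] m1] by auto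
  have res: "min_flow_up_gen_set n m a ({vec_of n m (\<lambda>_. 1)} \<union> G ` {2..n}) \<and> spline_rank n m a = n"
  proof (rule generic[where p = p and \<beta> = d and prev = "\<lambda>k. k - 1", OF n2 m1 L p2])
    show "\<forall>k\<in>{2..n}. G k \<in> splines n m a"
    proof
      fix k assume k: "k \<in> {2..n}"
      have iv: "is_vec n m (G k)" unfolding G_def using m1 by (intro vec_of_is_vec) simp
      have "a (r (l - 1) + j) dvd G k j - G k l" if jl: "1 \<le> j \<and> j < l \<and> l \<le> n" for j l
      proof -
        have t: "r (l - 1) + j \<in> {1..r n}" using idx_range[of j l n] jl by auto
        consider "k \<le> j" | "l < k" | "j < k" "k \<le> l" by linarith
        then show ?thesis
        proof cases
          case 1 then show ?thesis using Geq[OF k] jl by simp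
        next
          case 2 then show ?thesis using Geq[OF k] jl by simp
        next
          case 3
          have "r (l - 1) \<le> r (n - 1)" using jl by (intro r_mono) auto
          then have "a (r (l - 1) + j) dvd d k" unfolding dI[OF k]
            using chain_inc[OF ch, of "r (l - 1) + j" "r (n - 1) + (k - 1)"] t 3 idx[OF k] by auto
          then show ?thesis using Geq[OF k] 3 jl by simp
        qed
      qed
      then show "G k \<in> splines n m a" unfolding splines_def mem_Collect_eq spline_iff[OF L] using iv by blast
    qed
    show "inj_on G {2..n}"
    proof (rule inj_onI)
      fix x y assume x: "x \<in> {2..n}" and y: "y \<in> {2..n}" and e: "G x = G y"
      show "x = y"
      proof (rule ccontr)
        assume "x \<noteq> y"
        then consider "x < y" | "y < x" by linarith
        then show False
        proof cases
          case 1
          have "G x x = d x" using Geq[OF x] x by simp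
          moreover have "G y x = 0" using Geq[OF y] 1 by simp
          ultimately show False using e dpos[OF x] by simp
        next
          case 2
          have "G y y = d y" using Geq[OF y] y by simp
          moreover have "G x y = 0" using Geq[OF x] 2 by simp
          ultimately show False using e dpos[OF y] by simp
        qed
      qed
    qed
    show "\<forall>k\<in>{2..n}. G k 1 = 0" using Geq by auto
    show "\<forall>k\<in>{2..n}. G k k \<noteq> 0 \<and> (\<forall>t. 1 \<le> t \<and> t < k \<longrightarrow> G k t = 0)"
    proof
      fix k assume k: "k \<in> {2..n}"
      show "G k k \<noteq> 0 \<and> (\<forall>t. 1 \<le> t \<and> t < k \<longrightarrow> G k t = 0)"
        using Geq[OF k] dpos[OF k] k by auto
    qed
    have fd: "d k dvd f k - f (k - 1)" if f: "f \<in> splines n m a" and k: "k \<in> {2..n}" for f k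
    proof (cases "k = n")
      case True
      have "a (r (n - 1) + (n - 1)) dvd f (n - 1) - f n" using spl[OF f, rule_format, of "n - 1" n] n2 by auto
      then show ?thesis using True dI[OF k] by (simp add: dvd_diff_commute)
    next
      case False
      have h1: "a (r (n - 1) + k) dvd f k - f n" using spl[OF f, rule_format, of k n] k False by auto
      have "r (n - 1) + k \<in> {1..r n}" using idx_range[of k n n] k False by auto
      then have "d k dvd a (r (n - 1) + k)" unfolding dI[OF k]
        using chain_inc[OF ch, of "r (n - 1) + (k - 1)" "r (n - 1) + k"] idx[OF k] by auto
      then have h1': "d k dvd f k - f n" using h1 dvd_trans by blast
      have kk: "1 \<le> k - 1 \<and> k - 1 < n \<and> n \<le> n" using k by auto
      have "a (r (n - 1) + (k - 1)) dvd f (k - 1) - f n" using spl[OF f, rule_format, of "k - 1" n, OF kk] .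
      then have h2: "d k dvd f (k - 1) - f n" using dI[OF k] by simp
      have "d k dvd (f k - f n) - (f (k - 1) - f n)" using h1' h2 by (rule dvd_diff)
      then show ?thesis by simp
    qed
    show "\<forall>f\<in>splines n m a. \<exists>c0 coef. \<forall>i\<in>{1..n}. f i = (c0 + (\<Sum>k\<in>{2..n}. coef k * G k i)) mod m"
    proof
      fix f assume f: "f \<in> splines n m a"
      define coef where "coef k = (f k - f (k - 1)) div d k" for k
      show "\<exists>c0 coef. \<forall>i\<in>{1..n}. f i = (c0 + (\<Sum>k\<in>{2..n}. coef k * G k i)) mod m"
      proof (intro exI[of _ "f 1"] exI[of _ coef] ballI)
        fix i assume i: "i \<in> {1..n}"
        have "(\<Sum>k\<in>{2..n}. coef k * G k i) = (\<Sum>k\<in>{2..n}. if k \<le> i then f k - f (k - 1) else 0)"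
        proof (rule sum.cong)
          fix k assume k: "k \<in> {2..n}"
          show "coef k * G k i = (if k \<le> i then f k - f (k - 1) else 0)"
            using Geq[OF k] fd[OF f k] i unfolding coef_def by auto
        qed simp
        also have "\<dots> = sum (\<lambda>k. f k - f (k - 1)) {k\<in>{2..n}. k \<le> i}"
          by (rule sum.inter_filter[symmetric]) simp
        also have "{k\<in>{2..n}. k \<le> i} = {2..i}" using i by auto
        also have "sum (\<lambda>k. f k - f (k - 1)) {2..i} = f i - f 1" using i by (intro tele) auto
        finally show "f i = (f 1 + (\<Sum>k\<in>{2..n}. coef k * G k i)) mod m" using spl_vec[OF f i] by simp
      qed
    qed
    show "\<forall>k\<in>{2..n}. 0 < d k \<and> d k * p dvd m \<and> k - 1 \<in> {1..n}"
    proof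
      fix k assume k: "k \<in> {2..n}"
      have "d k * p dvd a (r n) * p" using ddvd[OF k] by (rule mult_dvd_mono) simp
      then show "0 < d k \<and> d k * p dvd m \<and> k - 1 \<in> {1..n}" using dpos[OF k] ap k by auto
    qed
    show "\<forall>f\<in>splines n m a. \<forall>k\<in>{2..n}. d k dvd f k - f (k - 1)" using fd by blast
    show "\<forall>j\<in>{2..n}. \<forall>k\<in>{2..n}. [G j k - G j (k - 1) = (if j = k then d k else 0)] (mod m)"
    proof (intro ballI)
      fix j k assume j: "j \<in> {2..n}" and k: "k \<in> {2..n}"
      have "G j k - G j (k - 1) = (if j = k then d k else 0)" using Geq[OF j] j k by auto
      then show "[G j k - G j (k - 1) = (if j = k then d k else 0)] (mod m)" by simp
    qed
  qed
  then show ?thesis unfolding G_def .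
qed


theorem mainTheorem4:
  fixes n :: nat and m :: int and a :: "nat \<Rightarrow> int"
  assumes n2: "2 \<le> n"
    and m1: "1 < m"
    and labels: "\<forall>s\<in>{1..r n}. 0 < a s \<and> a s dvd m \<and> zero_divisor_mod m (a s)"
  shows
    "((\<forall>s\<in>{1..<r n}. a (s + 1) dvd a s) \<and> a 1 dvd m \<and> m \<noteq> a 1 \<longrightarrow>
        min_flow_up_gen_set n m a
          ({vec_of n m (\<lambda>_. 1)} \<union>
           (\<lambda>k. vec_of n m (\<lambda>i. if i = k then a (r (k - 1) + 1) else 0)) ` {2..n})
        \<and> spline_rank n m a = n)
   \<and> ((\<forall>s\<in>{1..<r n}. a s dvd a (s + 1)) \<and> a (r n) dvd m \<and> m \<noteq> a (r n) \<longrightarrow>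
        min_flow_up_gen_set n m a
          ({vec_of n m (\<lambda>_. 1)} \<union>
           (\<lambda>k. vec_of n m (\<lambda>i. if k \<le> i then a (r n - (n - k)) else 0)) ` {2..n})
        \<and> spline_rank n m a = n)"
proof -
  have lab: "\<forall>s\<in>{1..r n}. 0 < a s \<and> a s dvd m" using labels by blast
  show ?thesis
  proof (intro conjI impI)
    assume h: "(\<forall>s\<in>{1..<r n}. a (s + 1) dvd a s) \<and> a 1 dvd m \<and> m \<noteq> a 1"
    show "min_flow_up_gen_set n m a
          ({vec_of n m (\<lambda>_. 1)} \<union>
           (\<lambda>k. vec_of n m (\<lambda>i. if i = k then a (r (k - 1) + 1) else 0)) ` {2..n})" 
      using case1[OF n2 m1 lab] h by blast
    show "spline_rank n m a = n" using case1[OF n2 m1 lab] h by blast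
  next
    assume h: "(\<forall>s\<in>{1..<r n}. a s dvd a (s + 1)) \<and> a (r n) dvd m \<and> m \<noteq> a (r n)"
    show "min_flow_up_gen_set n m a
          ({vec_of n m (\<lambda>_. 1)} \<union>
           (\<lambda>k. vec_of n m (\<lambda>i. if k \<le> i then a (r n - (n - k)) else 0)) ` {2..n})"
      using case2[OF n2 m1 lab] h by blast
    show "spline_rank n m a = n" using case2[OF n2 m1 lab] h by blast
  qed
qed

end
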